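(* Consider the numerator parameters $\frac{v^{(i)}_r+\sigma}{\ell_r}$ ($r=1,\dots,m$, $\sigma=0,\dots,\ell_r-1$) and denominator parameters $\frac{t}{\ell_0}$ ($t=1,\dots,\ell_0$) of the series $F^{(\mathbf b_i)}_{\mathbf b_i}(\lambda)=\sum_{s\ge0}\frac{\prod_r\prod_\sigma((v^{(i)}_r+\sigma)/\ell_r)_s}{\prod_{t=1}^{\ell_0}(t/\ell_0)_s}\lambda^{s\ell_0}$. (a) If $\mathbf b_i$ is an interior point of $P(A)$, then exactly $\ell_0-R_k$ factors appear in both numerator and denominator, namely $\{(1-s_0^{(j)}/\ell_0)_s:\mathbf b_j\in\mathcal B_k\text{ a boundary point of }P(A)\}$. (b) If $\mathbf b_i$ is a boundary point of $P(A)$, then exactly $\ell_0-R_k-1$ factors appear in both numerator and denominator, namely $\{(1-s_0^{(j)}/\ell_0)_s:\mathbf b_j\in\mathcal B_k\text{ a boundary point of }P(A),\ \mathbf b_j\neq\mathbf b_i\}$.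
   Context: Let $A=\{\mathbf a_1,\dots,\mathbf a_m\}\subseteq\mathbb Z^n$ be linearly independent over $\mathbb R$, $\mathbf a_0\in\mathbb Z^n$, and $\ell_0,\dots,\ell_m$ positive integers with gcd $1$, $\ell_0\mathbf a_0=\sum_{j=1}^m\ell_j\mathbf a_j$, $\ell_0=\sum_{j=1}^m\ell_j$. Let $\mathbb ZA$, $\mathbb ZA_+$ be the groups generated by $A$ and $A\cup\{\mathbf a_0\}$. Let $V$ be the real span of $A$, $V_{\mathbb Z}=V\cap\mathbb Z^n$, $P(A)=\{\sum_jc_j\mathbf a_j:0\le c_j<1\}$, $\mathcal B=V_{\mathbb Z}\cap P(A)$. Each $\mathbf b\in\mathcal B$ is written uniquely $\sum_rv_r\mathbf a_r$ with $v_r\in[0,1)$; $\mathbf b$ is an interior point of $P(A)$ if all $v_r>0$ and a boundary point otherwise. Fix a coset $\mathcal C_k$ of $\mathbb ZA_+$ in $V_{\mathbb Z}$, $\mathcal B_k=\mathcal B\cap\mathcal C_k$ (which has $\ell_0$ elements), and let $R_k$ be the number of interior points of $P(A)$ in $\mathcal B_k$. Fix $\mathbf b_i=\sum_rv^{(i)}_r\mathbf a_r\in\mathcal B_k$. For $\mathbf b_j\in\mathcal B_k$ let $s_0^{(j)}\in\{0,\dots,\ell_0-1\}$ be the unique element with $\mathbf b_i+s_0^{(j)}\mathbf a_0\equiv\mathbf b_j\pmod{\mathbb ZA}$. Pochhammer: $(a)_s=a(a+1)\cdots(a+s-1)$. *)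

theory Defs
  imports "HOL-Analysis.Analysis" "HOL-Library.Multiset"
begin

text \<open>Vectors of Z^n are modelled as real vectors (real^'n) with integer coordinates.
  The family a is indexed by nat: a 0 is the extra vector a_0 and a 1, ..., a m are the elements of A.\<close>

definition intv :: "real^'n \<Rightarrow> bool" where
  "intv x \<longleftrightarrow> (\<forall>i. x $ i \<in> \<int>)"

text \<open>Integer lattice generated by a j, j in I.  ZA = lat a {1..m}, ZA_+ = lat a {0..m}.\<close>
definition lat :: "(nat \<Rightarrow> real^'n) \<Rightarrow> nat set \<Rightarrow> (real^'n) set" where
  "lat a I = {x. \<exists>c::nat \<Rightarrow> int. x = (\<Sum>j\<in>I. of_int (c j) *\<^sub>R a j)}"

definition VZ :: "(nat \<Rightarrow> real^'n) \<Rightarrow> nat \<Rightarrow> (real^'n) set" where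
  "VZ a m = {x \<in> span (a ` {1..m}). intv x}"

definition pcoord :: "(nat \<Rightarrow> real^'n) \<Rightarrow> nat \<Rightarrow> real^'n \<Rightarrow> (nat \<Rightarrow> real) \<Rightarrow> bool" where
  "pcoord a m b v \<longleftrightarrow> b = (\<Sum>r\<in>{1..m}. v r *\<^sub>R a r) \<and> (\<forall>r\<in>{1..m}. 0 \<le> v r \<and> v r < 1)"

definition PA :: "(nat \<Rightarrow> real^'n) \<Rightarrow> nat \<Rightarrow> (real^'n) set" where
  "PA a m = {b. \<exists>v. pcoord a m b v}"

definition Bset :: "(nat \<Rightarrow> real^'n) \<Rightarrow> nat \<Rightarrow> (real^'n) set" where
  "Bset a m = VZ a m \<inter> PA a m"

definition interior_pt :: "(nat \<Rightarrow> real^'n) \<Rightarrow> nat \<Rightarrow> real^'n \<Rightarrow> bool" where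
  "interior_pt a m b \<longleftrightarrow> (\<exists>v. pcoord a m b v \<and> (\<forall>r\<in>{1..m}. 0 < v r))"

definition boundary_pt :: "(nat \<Rightarrow> real^'n) \<Rightarrow> nat \<Rightarrow> real^'n \<Rightarrow> bool" where
  "boundary_pt a m b \<longleftrightarrow> (\<exists>v. pcoord a m b v \<and> (\<exists>r\<in>{1..m}. v r = 0))"

definition coset_ZAplus :: "(nat \<Rightarrow> real^'n) \<Rightarrow> nat \<Rightarrow> real^'n \<Rightarrow> (real^'n) set" where
  "coset_ZAplus a m c = {x \<in> VZ a m. x - c \<in> lat a {0..m}}"

definition Bk :: "(nat \<Rightarrow> real^'n) \<Rightarrow> nat \<Rightarrow> real^'n \<Rightarrow> (real^'n) set" where
  "Bk a m c = Bset a m \<inter> coset_ZAplus a m c"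

definition Rk :: "(nat \<Rightarrow> real^'n) \<Rightarrow> nat \<Rightarrow> real^'n \<Rightarrow> nat" where
  "Rk a m c = card {b \<in> Bk a m c. interior_pt a m b}"

definition s0 :: "(nat \<Rightarrow> real^'n) \<Rightarrow> nat \<Rightarrow> nat \<Rightarrow> real^'n \<Rightarrow> real^'n \<Rightarrow> nat" where
  "s0 a m l0 bi bj = (THE s. s < l0 \<and> bi + real s *\<^sub>R a 0 - bj \<in> lat a {1..m})"

definition num_params :: "nat \<Rightarrow> (nat \<Rightarrow> nat) \<Rightarrow> (nat \<Rightarrow> real) \<Rightarrow> real multiset" where
  "num_params m l v = (\<Sum>r\<in>{1..m}. mset (map (\<lambda>\<sigma>. (v r + real \<sigma>) / real (l r)) [0..<l r]))"

definition den_params :: "(nat \<Rightarrow> nat) \<Rightarrow> real multiset" where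
  "den_params l = mset (map (\<lambda>t. real t / real (l 0)) [1..<l 0 + 1])"

end

theory Submission
  imports Defs
begin


lemma coord_unique:
  fixes a :: "nat \<Rightarrow> real^'n"
  assumes inj: "inj_on a {1..m}" and indep: "independent (a ` {1..m})"
    and eq: "(\<Sum>r\<in>{1..m}. u r *\<^sub>R a r) = (\<Sum>r\<in>{1..m}. w r *\<^sub>R a r)"
    and r: "r \<in> {1..m}"
  shows "u r = w r"
proof -
  define f where "f x = u (inv_into {1..m} a x) - w (inv_into {1..m} a x)" for x
  have "(\<Sum>x\<in>a ` {1..m}. f x *\<^sub>R x) = (\<Sum>j\<in>{1..m}. f (a j) *\<^sub>R a j)"
    by (rule sum.reindex[OF inj, unfolded comp_def])
  also have "\<dots> = (\<Sum>j\<in>{1..m}. (u j - w j) *\<^sub>R a j)"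
  proof (rule sum.cong)
    fix j assume j: "j \<in> {1..m}"
    show "f (a j) *\<^sub>R a j = (u j - w j) *\<^sub>R a j" unfolding f_def inv_into_f_f[OF inj j] ..
  qed simp
  also have "\<dots> = 0" using eq by (simp add: scaleR_diff_left sum_subtractf)
  finally have z: "(\<Sum>x\<in>a ` {1..m}. f x *\<^sub>R x) = 0" .
  have "\<not> (\<exists>y\<in>a ` {1..m}. f y \<noteq> 0)"
  proof
    assume "\<exists>y\<in>a ` {1..m}. f y \<noteq> 0"
    then have "dependent (a ` {1..m})"
      unfolding dependent_finite[OF finite_imageI[OF finite_atLeastAtMost]] using z by blast
    with indep show False by simp
  qed
  then have "f (a r) = 0" using r by blast
  moreover have "inv_into {1..m} a (a r) = r" using inj r by (rule inv_into_f_f)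
  ultimately show ?thesis by (simp add: f_def)
qed

lemma gcd_lemma:
  fixes x :: int and l :: "nat \<Rightarrow> nat"
  assumes "\<forall>j\<in>S. int l0 dvd x * int (l j)" and "Gcd (l ` S) = 1" 
  shows "int l0 dvd x"
proof -
  have "\<forall>j\<in>S. l0 dvd nat \<bar>x\<bar> * l j"
  proof
    fix j assume "j \<in> S"
    then have "int l0 dvd x * int (l j)" using assms(1) by blast
    then have "int l0 dvd \<bar>x * int (l j)\<bar>" by (simp only: dvd_abs_iff)
    then have "int l0 dvd \<bar>x\<bar> * int (l j)" by (simp add: abs_mult)
    also have "\<bar>x\<bar> * int (l j) = int (nat \<bar>x\<bar> * l j)" by simp
    finally show "l0 dvd nat \<bar>x\<bar> * l j" by (simp only: int_dvd_int_iff)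
  qed
  then have "l0 dvd Gcd ((*) (nat \<bar>x\<bar>) ` (l ` S))" by (auto intro!: Gcd_greatest)
  moreover have "Gcd ((*) (nat \<bar>x\<bar>) ` (l ` S)) = nat \<bar>x\<bar>" by (simp only: Gcd_mult assms(2)) simp
  ultimately have "l0 dvd nat \<bar>x\<bar>" by simp
  then have "int l0 dvd int (nat \<bar>x\<bar>)" by (simp only: int_dvd_int_iff)
  then show ?thesis by simp
qed

lemma frac_unique:
  fixes u x :: real
  assumes "0 \<le> u" "u < 1" "u - x \<in> \<int>"
  shows "u = frac x"
proof -
  obtain k where k: "u - x = of_int k" using assms(3) Ints_cases by blast
  have "floor x = - k"
    using assms k by (intro floor_unique) auto
  then show ?thesis using k by (simp add: frac_def)
qed

lemma inter_distinct:
  assumes "\<forall>x. count B x \<le> 1"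
  shows "A \<inter># B = mset_set (set_mset A \<inter> set_mset B)"
proof (rule multiset_eqI)
  fix x
  show "count (A \<inter># B) x = count (mset_set (set_mset A \<inter> set_mset B)) x"
  proof -
    have c: "count B x \<le> 1" using assms by blast
    have f: "finite (set_mset A \<inter> set_mset B)" by simp
    show ?thesis
    proof (cases "count A x = 0 \<or> count B x = 0")
      case True
      have "count (A \<inter># B) x = 0" using True by auto
      moreover have "x \<notin> set_mset A \<inter> set_mset B" using True by (metis IntD1 IntD2 count_eq_zero_iff)
      ultimately show ?thesis by (simp add: count_mset_set')
    next
      case False
      then have nz: "count B x \<noteq> 0" "count A x \<noteq> 0" by auto
      then have "count B x = 1" "count A x \<ge> 1" using c by linarith+
      then show ?thesis using nz by (auto simp: count_mset_set' simp flip: count_greater_zero_iff)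
    qed
  qed
qed

lemma lat_add: "x \<in> lat a I \<Longrightarrow> y \<in> lat a I \<Longrightarrow> x + y \<in> lat a I"
proof -
  assume "x \<in> lat a I" "y \<in> lat a I"
  then obtain c d where "x = (\<Sum>j\<in>I. of_int (c j) *\<^sub>R a j)" "y = (\<Sum>j\<in>I. of_int (d j) *\<^sub>R a j)"
    unfolding lat_def by blast
  then have "x + y = (\<Sum>j\<in>I. of_int (c j + d j) *\<^sub>R a j)"
    by (simp add: sum.distrib scaleR_add_left)
  then show ?thesis unfolding lat_def by (intro CollectI exI[where x="\<lambda>j. c j + d j"])
qed

lemma lat_diff: "x \<in> lat a I \<Longrightarrow> y \<in> lat a I \<Longrightarrow> x - y \<in> lat a I"
proof -
  assume "x \<in> lat a I" "y \<in> lat a I"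
  then obtain c d where "x = (\<Sum>j\<in>I. of_int (c j) *\<^sub>R a j)" "y = (\<Sum>j\<in>I. of_int (d j) *\<^sub>R a j)"
    unfolding lat_def by blast
  then have "x - y = (\<Sum>j\<in>I. of_int (c j - d j) *\<^sub>R a j)"
    by (simp add: sum_subtractf scaleR_diff_left)
  then show ?thesis unfolding lat_def by (intro CollectI exI[where x="\<lambda>j. c j - d j"])
qed

lemma lat_intv:
  fixes a :: "nat \<Rightarrow> real^'n"
  assumes "\<forall>j\<in>I. intv (a j)" "x \<in> lat a I"
  shows "intv x"
proof -
  obtain c where x: "x = (\<Sum>j\<in>I. of_int (c j) *\<^sub>R a j)" using assms(2) unfolding lat_def by blast
  show ?thesis unfolding intv_def
  proof
    fix i
    have "x $ i = (\<Sum>j\<in>I. of_int (c j) * (a j $ i))" by (simp add: x)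
    also have "\<dots> \<in> \<int>" using assms(1) unfolding intv_def by (intro Ints_sum Ints_mult) auto
    finally show "x $ i \<in> \<int>" .
  qed
qed

lemma intv_add: "intv x \<Longrightarrow> intv y \<Longrightarrow> intv (x + y)"
  unfolding intv_def by auto



theorem proposition6p14:
  fixes a :: "nat \<Rightarrow> real^'n" and m :: nat and l :: "nat \<Rightarrow> nat"
    and c bi :: "real^'n" and v :: "nat \<Rightarrow> real"
  assumes aint: "\<forall>j\<in>{0..m}. intv (a j)"
    and inj: "inj_on a {1..m}"
    and indep: "independent (a ` {1..m})"
    and lpos: "\<forall>j\<in>{0..m}. 0 < l j"
    and lgcd: "Gcd (l ` {0..m}) = 1"
    and rel: "real (l 0) *\<^sub>R a 0 = (\<Sum>j\<in>{1..m}. real (l j) *\<^sub>R a j)"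
    and lsum: "l 0 = (\<Sum>j\<in>{1..m}. l j)"
    and c: "c \<in> VZ a m"
    and bi: "bi \<in> Bk a m c"
    and v: "pcoord a m bi v"
  shows "(interior_pt a m bi \<longrightarrow>
            num_params m l v \<inter># den_params l
              = mset_set ((\<lambda>b. 1 - real (s0 a m (l 0) bi b) / real (l 0)) `
                          {b \<in> Bk a m c. boundary_pt a m b})
          \<and> size (num_params m l v \<inter># den_params l) = l 0 - Rk a m c)
       \<and> (boundary_pt a m bi \<longrightarrow>
            num_params m l v \<inter># den_params l
              = mset_set ((\<lambda>b. 1 - real (s0 a m (l 0) bi b) / real (l 0)) `
                          {b \<in> Bk a m c. boundary_pt a m b \<and> b \<noteq> bi})
          \<and> size (num_params m l v \<inter># den_params l) = l 0 - Rk a m c - 1)"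
proof -
  define L where "L = l 0"
  have l0pos: "0 < L" using lpos by (auto simp: L_def)
  have lrpos: "0 < l r" if "r \<in> {1..m}" for r using lpos that by auto
  have a0exp: "x *\<^sub>R a 0 = (\<Sum>r\<in>{1..m}. (x * real (l r) / real L) *\<^sub>R a r)" for x :: real
  proof -
    have "x *\<^sub>R a 0 = (x / real L) *\<^sub>R (real (l 0) *\<^sub>R a 0)" using l0pos by (simp add: L_def)
    also have "\<dots> = (\<Sum>r\<in>{1..m}. (x * real (l r) / real L) *\<^sub>R a r)"
      unfolding rel scaleR_sum_right by simp
    finally show ?thesis .
  qed
  have biB: "bi \<in> VZ a m" "bi - c \<in> lat a {0..m}" using bi unfolding Bk_def Bset_def coset_ZAplus_def by auto
  have vb: "bi = (\<Sum>r\<in>{1..m}. v r *\<^sub>R a r)" "\<And>r. r \<in> {1..m} \<Longrightarrow> 0 \<le> v r \<and> v r < 1"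
    using v unfolding pcoord_def by auto
  define w where "w s r = v r + real s * real (l r) / real L" for s r
  define bf where "bf s = (\<Sum>r\<in>{1..m}. frac (w s r) *\<^sub>R a r)" for s
  have Ds: "bf s - bi = real s *\<^sub>R a 0 - (\<Sum>r\<in>{1..m}. of_int (floor (w s r)) *\<^sub>R a r)" for s
  proof -
    have "bf s = (\<Sum>r\<in>{1..m}. v r *\<^sub>R a r + (real s * real (l r) / real L) *\<^sub>R a r - of_int (floor (w s r)) *\<^sub>R a r)"
      unfolding bf_def frac_def w_def by (simp add: scaleR_add_left scaleR_diff_left)
    also have "\<dots> = bi + real s *\<^sub>R a 0 - (\<Sum>r\<in>{1..m}. of_int (floor (w s r)) *\<^sub>R a r)"
      unfolding vb(1) a0exp[of "real s"] by (simp add: sum.distrib sum_subtractf)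
    finally show ?thesis by simp
  qed
  have Dlat: "bf s - bi \<in> lat a {0..m}" for s
  proof -
    define cc where "cc j = (if j = 0 then int s else - floor (w s j))" for j
    have "(\<Sum>j\<in>{0..m}. of_int (cc j) *\<^sub>R a j) = of_int (cc 0) *\<^sub>R a 0 + (\<Sum>j\<in>{Suc 0..m}. of_int (cc j) *\<^sub>R a j)"
      by (rule sum.atLeast_Suc_atMost) simp
    also have "\<dots> = bf s - bi" unfolding Ds
      by (simp add: cc_def sum_negf[symmetric])
    finally show ?thesis unfolding lat_def by (intro CollectI exI[where x=cc]) simp
  qed
  have bfB: "bf s \<in> Bk a m c" for s
  proof -
    have eq: "bf s = bi + (bf s - bi)" by simp
    have "intv (bf s - bi)" using lat_intv[OF aint Dlat] .
    moreover have "intv bi" using biB(1) unfolding VZ_def by auto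
    ultimately have iv: "intv (bf s)" by (subst eq, intro intv_add)
    have sp: "bf s \<in> span (a ` {1..m})" unfolding bf_def
      by (intro span_sum span_scale span_base) auto
    have pc: "pcoord a m (bf s) (\<lambda>r. frac (w s r))" unfolding pcoord_def bf_def
      by (auto simp: frac_lt_1)
    have "bf s - c = (bi - c) + (bf s - bi)" by simp
    also have "\<dots> \<in> lat a {0..m}" by (intro lat_add biB Dlat)
    finally show ?thesis using iv sp pc unfolding Bk_def Bset_def coset_ZAplus_def VZ_def PA_def by blast
  qed
  have bf0: "bf 0 = bi"
    unfolding bf_def w_def vb(1) by (intro sum.cong refl) (simp add: frac_eq vb(2))
  have Bsurj: "\<exists>s<L. b = bf s" if b: "b \<in> Bk a m c" for b
  proof -
    have bB: "b \<in> PA a m" "b - c \<in> lat a {0..m}" using b unfolding Bk_def Bset_def coset_ZAplus_def by auto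
    have "(b - c) - (bi - c) \<in> lat a {0..m}" by (intro lat_diff bB biB)
    then obtain e where e: "b - bi = (\<Sum>j\<in>{0..m}. of_int (e j) *\<^sub>R a j)" unfolding lat_def by auto
    obtain u where u: "pcoord a m b u" using bB(1) unfolding PA_def by auto
    have "b - bi = of_int (e 0) *\<^sub>R a 0 + (\<Sum>j\<in>{Suc 0..m}. of_int (e j) *\<^sub>R a j)"
      unfolding e by (rule sum.atLeast_Suc_atMost) simp
    also have "\<dots> = (\<Sum>r\<in>{1..m}. (of_int (e 0) * real (l r) / real L + of_int (e r)) *\<^sub>R a r)"
      unfolding a0exp by (simp add: sum.distrib scaleR_add_left)
    finally have "b = (\<Sum>r\<in>{1..m}. v r *\<^sub>R a r) + (\<Sum>r\<in>{1..m}. (of_int (e 0) * real (l r) / real L + of_int (e r)) *\<^sub>R a r)"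
      using vb(1) by (simp add: algebra_simps)
    also have "\<dots> = (\<Sum>r\<in>{1..m}. (v r + of_int (e 0) * real (l r) / real L + of_int (e r)) *\<^sub>R a r)"
      by (simp add: sum.distrib scaleR_add_left add.assoc)
    finally have beq: "(\<Sum>r\<in>{1..m}. u r *\<^sub>R a r) = (\<Sum>r\<in>{1..m}. (v r + of_int (e 0) * real (l r) / real L + of_int (e r)) *\<^sub>R a r)"
      using u unfolding pcoord_def by simp
    define s where "s = nat (e 0 mod int L)"
    define q where "q = e 0 div int L"
    have sL: "s < L" using l0pos unfolding s_def by (simp add: nat_less_iff)
    have e0: "e 0 = int s + q * int L" unfolding s_def q_def using l0pos
      by (simp add: mult.commute)
    have "u r = frac (w s r)" if r: "r \<in> {1..m}" for r
    proof (rule frac_unique)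
      show "0 \<le> u r" "u r < 1" using u r unfolding pcoord_def by auto
      have ur: "u r = v r + of_int (e 0) * real (l r) / real L + of_int (e r)"
        using coord_unique[OF inj indep beq r] .
      have "of_int (e 0) * real (l r) / real L = real s * real (l r) / real L + of_int (q * int (l r))"
        unfolding e0 using l0pos by (simp add: field_simps)
      then have "u r - w s r = of_int (q * int (l r) + e r)" unfolding ur w_def by simp
      then show "u r - w s r \<in> \<int>" by simp
    qed
    then have "b = bf s" using u unfolding pcoord_def bf_def by (auto intro!: sum.cong)
    with sL show ?thesis by blast
  qed
  have flat: "bi + real s *\<^sub>R a 0 - bf s = (\<Sum>r\<in>{1..m}. of_int (floor (w s r)) *\<^sub>R a r)" for s
    using Ds[of s] by (simp add: algebra_simps)
  have s0bf: "s0 a m L bi (bf s) = s" if sL: "s < L" for s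
    unfolding s0_def
  proof (rule the_equality)
    show "s < L \<and> bi + real s *\<^sub>R a 0 - bf s \<in> lat a {1..m}"
      using sL unfolding flat lat_def by (intro conjI CollectI exI[where x="\<lambda>r. floor (w s r)"]) auto
    fix s' assume s': "s' < L \<and> bi + real s' *\<^sub>R a 0 - bf s \<in> lat a {1..m}"
    then obtain cc where cc: "bi + real s' *\<^sub>R a 0 - bf s = (\<Sum>r\<in>{1..m}. of_int (cc r) *\<^sub>R a r)"
      unfolding lat_def by auto
    have "(real s' - real s) *\<^sub>R a 0 = (bi + real s' *\<^sub>R a 0 - bf s) - (bi + real s *\<^sub>R a 0 - bf s)"
      by (simp add: algebra_simps)
    also have "\<dots> = (\<Sum>r\<in>{1..m}. of_int (cc r - floor (w s r)) *\<^sub>R a r)"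
      unfolding cc flat by (simp add: sum_subtractf scaleR_diff_left)
    finally have eq: "(\<Sum>r\<in>{1..m}. ((real s' - real s) * real (l r) / real L) *\<^sub>R a r) = (\<Sum>r\<in>{1..m}. of_int (cc r - floor (w s r)) *\<^sub>R a r)"
      unfolding a0exp .
    have "int L dvd (int s' - int s) * int (l j)" if j: "j \<in> {0..m}" for j
    proof (cases "j = 0")
      case True then show ?thesis by (simp add: L_def)
    next
      case False
      then have j1: "j \<in> {1..m}" using j by auto
      have "(real s' - real s) * real (l j) / real L = of_int (cc j - floor (w s j))"
        using coord_unique[OF inj indep eq j1] .
      then have "(real s' - real s) * real (l j) = of_int (cc j - floor (w s j)) * real L"
        using l0pos by (simp add: field_simps)
      then have "of_int ((int s' - int s) * int (l j)) = (of_int ((cc j - floor (w s j)) * int L) :: real)"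
        by simp
      then have "(int s' - int s) * int (l j) = (cc j - floor (w s j)) * int L"
        by (simp only: of_int_eq_iff)
      then show ?thesis by simp
    qed
    then have dv: "int L dvd int s' - int s" using lgcd by (intro gcd_lemma) auto
    have lt: "\<bar>int s' - int s\<bar> < int L" using s' sL by auto
    have "int s' - int s = 0"
    proof (rule ccontr)
      assume "int s' - int s \<noteq> 0"
      from dvd_imp_le_int[OF this dv] lt show False by simp
    qed
    then show "s' = s" by simp
  qed
  have pc_unique: "\<forall>r\<in>{1..m}. u r = u' r" if "pcoord a m b u" "pcoord a m b u'" for b u u'
  proof -
    have "(\<Sum>r\<in>{1..m}. u r *\<^sub>R a r) = (\<Sum>r\<in>{1..m}. u' r *\<^sub>R a r)"
      using that unfolding pcoord_def by simp
    from coord_unique[OF inj indep this] show ?thesis by blast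
  qed
  have int_iff: "interior_pt a m b \<longleftrightarrow> (\<forall>r\<in>{1..m}. 0 < u r)" if u: "pcoord a m b u" for b u
  proof
    assume "interior_pt a m b"
    then obtain u' where "pcoord a m b u'" "\<forall>r\<in>{1..m}. 0 < u' r" unfolding interior_pt_def by blast
    with pc_unique[OF u this(1)] show "\<forall>r\<in>{1..m}. 0 < u r" by simp
  next
    assume "\<forall>r\<in>{1..m}. 0 < u r"
    with u show "interior_pt a m b" unfolding interior_pt_def by blast
  qed
  have bd_iff: "boundary_pt a m b \<longleftrightarrow> (\<exists>r\<in>{1..m}. u r = 0)" if u: "pcoord a m b u" for b u
  proof
    assume "boundary_pt a m b"
    then obtain u' where "pcoord a m b u'" "\<exists>r\<in>{1..m}. u' r = 0" unfolding boundary_pt_def by blast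
    with pc_unique[OF u this(1)] show "\<exists>r\<in>{1..m}. u r = 0" by simp
  next
    assume "\<exists>r\<in>{1..m}. u r = 0"
    with u show "boundary_pt a m b" unfolding boundary_pt_def by blast
  qed
  have int_bd: "interior_pt a m b \<longleftrightarrow> \<not> boundary_pt a m b" if bB: "b \<in> Bk a m c" for b
  proof -
    obtain u where u: "pcoord a m b u" using bB unfolding Bk_def Bset_def PA_def by auto
    then have "\<forall>r\<in>{1..m}. 0 \<le> u r" unfolding pcoord_def by auto
    then show ?thesis unfolding int_iff[OF u] bd_iff[OF u] by force
  qed
  have pcbf: "pcoord a m (bf s) (\<lambda>r. frac (w s r))" for s
    unfolding pcoord_def bf_def by (auto simp: frac_lt_1)
  have bd_bf: "boundary_pt a m (bf s) \<longleftrightarrow> (\<exists>r\<in>{1..m}. w s r \<in> \<int>)" for s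
    unfolding bd_iff[OF pcbf] by simp
  have inj_bf: "inj_on bf {..<L}"
  proof (rule inj_onI)
    fix x y assume "x \<in> {..<L}" "y \<in> {..<L}" "bf x = bf y"
    have hx: "s0 a m L bi (bf x) = x" using \<open>x \<in> {..<L}\<close> by (intro s0bf) simp
    have hy: "s0 a m L bi (bf y) = y" using \<open>y \<in> {..<L}\<close> by (intro s0bf) simp
    from hx have "s0 a m L bi (bf y) = x" unfolding \<open>bf x = bf y\<close> .
    with hy show "x = y" by simp
  qed
  have Bk_eq: "Bk a m c = bf ` {..<L}"
  proof
    show "Bk a m c \<subseteq> bf ` {..<L}"
    proof
      fix b assume "b \<in> Bk a m c"
      from Bsurj[OF this] obtain s where "s < L" "b = bf s" by blast
      then show "b \<in> bf ` {..<L}" by blast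
    qed
    show "bf ` {..<L} \<subseteq> Bk a m c" using bfB by blast
  qed
  have finBk: "finite (Bk a m c)" unfolding Bk_eq by simp
  have cardBk: "card (Bk a m c) = L" unfolding Bk_eq card_image[OF inj_bf] by simp
  define Sp where "Sp = {s. 0 < s \<and> s < L \<and> (\<exists>r\<in>{1..m}. w s r \<in> \<int>)}"
  have SpL: "Sp \<subseteq> {..<L}" unfolding Sp_def by auto
  have bdset: "{b \<in> Bk a m c. boundary_pt a m b \<and> b \<noteq> bi} = bf ` Sp"
  proof
    show "{b \<in> Bk a m c. boundary_pt a m b \<and> b \<noteq> bi} \<subseteq> bf ` Sp"
    proof
      fix b assume b: "b \<in> {b \<in> Bk a m c. boundary_pt a m b \<and> b \<noteq> bi}"
      then obtain s where s: "s < L" "b = bf s" using Bsurj by blast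
      have "s \<noteq> 0"
      proof
        assume "s = 0" then show False using b s bf0 by simp
      qed
      then show "b \<in> bf ` Sp" using s b bd_bf unfolding Sp_def by auto
    qed
    show "bf ` Sp \<subseteq> {b \<in> Bk a m c. boundary_pt a m b \<and> b \<noteq> bi}"
    proof
      fix b assume "b \<in> bf ` Sp"
      then obtain s where s: "s \<in> Sp" "b = bf s" by auto
      have "bf s \<noteq> bf 0"
      proof
        assume "bf s = bf 0"
        then have "s = 0" using inj_onD[OF inj_bf] s(1) l0pos unfolding Sp_def by auto
        then show False using s(1) unfolding Sp_def by auto
      qed
      then show "b \<in> {b \<in> Bk a m c. boundary_pt a m b \<and> b \<noteq> bi}"
        using s bfB bd_bf bf0 unfolding Sp_def by auto
    qed
  qed
  have imgS: "(\<lambda>b. 1 - real (s0 a m (l 0) bi b) / real (l 0)) ` (bf ` Sp) = (\<lambda>s. 1 - real s / real L) ` Sp"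
    unfolding image_image L_def[symmetric] using s0bf SpL by (intro image_cong refl) auto
  have inj_f: "inj_on (\<lambda>s. 1 - real s / real L) Sp"
    using l0pos by (intro inj_onI) (simp add: field_simps)
  have den_eq: "den_params l = mset (map (\<lambda>t. real t / real L) [1..<L + 1])"
    unfolding den_params_def L_def ..
  have dist: "distinct (map (\<lambda>t. real t / real L) [1..<L + 1])"
  proof -
    have "inj_on (\<lambda>t. real t / real L) (set [1..<L + 1])"
      using l0pos by (intro inj_onI) simp
    then show ?thesis unfolding distinct_map by simp
  qed
  have den_cnt: "\<forall>x. count (den_params l) x \<le> 1"
    unfolding den_eq using dist[unfolded distinct_count_atmost_1] by simp
  have setnum: "set_mset (num_params m l v) = {y. \<exists>r\<in>{1..m}. \<exists>\<sigma><l r. y = (v r + real \<sigma>) / real (l r)}"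
    unfolding num_params_def
    apply (auto simp: set_mset_sum)
    subgoal for x y by (rule bexI[where x=x]) auto
    done
  have setden: "set_mset (den_params l) = {y. \<exists>t. 1 \<le> t \<and> t \<le> L \<and> y = real t / real L}"
    unfolding den_eq by auto
  have X: "set_mset (num_params m l v) \<inter> set_mset (den_params l) = (\<lambda>s. 1 - real s / real L) ` Sp"
  proof
    show "set_mset (num_params m l v) \<inter> set_mset (den_params l) \<subseteq> (\<lambda>s. 1 - real s / real L) ` Sp"
    proof
      fix y assume "y \<in> set_mset (num_params m l v) \<inter> set_mset (den_params l)"
      then obtain r \<sigma> t where r: "r \<in> {1..m}" and sig: "\<sigma> < l r" and y1: "y = (v r + real \<sigma>) / real (l r)"
        and t: "1 \<le> t" "t \<le> L" and y2: "y = real t / real L"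
        unfolding setnum setden by blast
      have hv: "0 \<le> v r" "v r < 1" using vb(2)[OF r] by auto
      have lr: "0 < real (l r)" using lrpos[OF r] by simp
      have L0: "0 < real L" using l0pos by simp
      have e1: "v r + real \<sigma> = real t * real (l r) / real L"
        using y1 y2 lr L0 by (simp add: field_simps)
      have sig1: "real \<sigma> + 1 \<le> real (l r)" using sig by linarith
      have tL: "t < L"
      proof (rule ccontr)
        assume "\<not> t < L"
        then have "t = L" using t by simp
        then have "v r + real \<sigma> = real (l r)" using e1 L0 by simp
        then show False using hv sig1 by linarith
      qed
      define s where "s = L - t"
      have rs: "real s = real L - real t" unfolding s_def using t by (simp add: of_nat_diff)
      have sSp: "s \<in> Sp"
      proof -
        have "w s r = v r + real (l r) - real t * real (l r) / real L"
          unfolding w_def rs using L0 by (simp add: field_simps)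
        also have "\<dots> = of_int (int (l r) - int \<sigma>)" using e1 by simp
        finally have "w s r \<in> \<int>" by simp
        then show ?thesis unfolding Sp_def s_def using r t tL by auto
      qed
      have "y = 1 - real s / real L" unfolding y2 rs using L0 by (simp add: field_simps)
      with sSp show "y \<in> (\<lambda>s. 1 - real s / real L) ` Sp" by blast
    qed
    show "(\<lambda>s. 1 - real s / real L) ` Sp \<subseteq> set_mset (num_params m l v) \<inter> set_mset (den_params l)"
    proof
      fix y assume "y \<in> (\<lambda>s. 1 - real s / real L) ` Sp"
      then obtain s where sSp: "s \<in> Sp" and y: "y = 1 - real s / real L" by blast
      then obtain r where r: "r \<in> {1..m}" and wi: "w s r \<in> \<int>" and s: "0 < s" "s < L" unfolding Sp_def by blast
      obtain k where k: "w s r = of_int k" using wi Ints_cases by blast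
      have hv: "0 \<le> v r" "v r < 1" using vb(2)[OF r] by auto
      have lr: "0 < real (l r)" using lrpos[OF r] by simp
      have L0: "0 < real L" using l0pos by simp
      have p: "0 < real s * real (l r) / real L" using s lr L0 by simp
      have q: "real s * real (l r) / real L < real (l r)"
        using s lr L0 by (simp add: field_simps)
      have "0 < (of_int k :: real)" using k hv p unfolding w_def by linarith
      then have k1: "1 \<le> k" by simp
      have "(of_int k :: real) < 1 + real (l r)" using k hv q unfolding w_def by linarith
      then have k2: "k \<le> int (l r)" by linarith
      define \<sigma> where "\<sigma> = nat (int (l r) - k)"
      have sig: "\<sigma> < l r" unfolding \<sigma>_def using k1 k2 by linarith
      have rsig: "real \<sigma> = real (l r) - of_int k" unfolding \<sigma>_def using k2 by simp
      have "(v r + real \<sigma>) / real (l r) = (real (l r) - real s * real (l r) / real L) / real (l r)"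
        unfolding rsig k[symmetric] w_def by simp
      also have "\<dots> = y" unfolding y using lr L0 by (simp add: field_simps)
      finally have y1: "y \<in> set_mset (num_params m l v)" unfolding setnum using r sig by force
      have rt: "real (L - s) = real L - real s" using s by (simp add: of_nat_diff)
      have "y = real (L - s) / real L" unfolding y rt using L0 by (simp add: field_simps)
      then have "y \<in> set_mset (den_params l)" unfolding setden using s
        by (intro CollectI exI[where x="L - s"]) auto
      with y1 show "y \<in> set_mset (num_params m l v) \<inter> set_mset (den_params l)" by blast
    qed
  qed
  define F where "F = (\<lambda>b. 1 - real (s0 a m (l 0) bi b) / real (l 0))"
  define BD where "BD = {b \<in> Bk a m c. boundary_pt a m b}"
  define BD' where "BD' = {b \<in> Bk a m c. boundary_pt a m b \<and> b \<noteq> bi}"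
  have meq: "num_params m l v \<inter># den_params l = mset_set (F ` BD')"
  proof -
    have "num_params m l v \<inter># den_params l = mset_set ((\<lambda>s. 1 - real s / real L) ` Sp)"
      using inter_distinct[OF den_cnt] X by simp
    also have "(\<lambda>s. 1 - real s / real L) ` Sp = F ` BD'"
      unfolding BD'_def bdset F_def imgS ..
    finally show ?thesis .
  qed
  have finSp: "finite Sp" using SpL finite_subset by blast
  have sz: "size (num_params m l v \<inter># den_params l) = card BD'"
  proof -
    have "size (num_params m l v \<inter># den_params l) = card (F ` BD')" unfolding meq
      using finSp by (simp add: BD'_def bdset)
    also have "F ` BD' = (\<lambda>s. 1 - real s / real L) ` Sp"
      unfolding BD'_def bdset F_def imgS ..
    also have "card \<dots> = card Sp" using inj_f by (rule card_image)
    also have "\<dots> = card (bf ` Sp)" using inj_on_subset[OF inj_bf SpL] by (rule card_image[symmetric])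
    finally show ?thesis unfolding BD'_def bdset .
  qed
  have cardBD: "card BD = L - Rk a m c"
  proof -
    have "Bk a m c = {b \<in> Bk a m c. interior_pt a m b} \<union> BD" unfolding BD_def using int_bd by blast
    moreover have "{b \<in> Bk a m c. interior_pt a m b} \<inter> BD = {}" unfolding BD_def using int_bd by blast
    ultimately have "card (Bk a m c) = Rk a m c + card BD"
      unfolding Rk_def using finBk by (metis (no_types, lifting) card_Un_disjoint finite_Un)
    then show ?thesis using cardBk by simp
  qed
  have biBk: "bi \<in> Bk a m c" using bi .
  show ?thesis unfolding F_def[symmetric] BD_def[symmetric] BD'_def[symmetric]
  proof (intro conjI impI)
    assume "interior_pt a m bi"
    then have "\<not> boundary_pt a m bi" using int_bd[OF biBk] by simp
    then have "BD' = BD" unfolding BD_def BD'_def by blast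
    then show "num_params m l v \<inter># den_params l = mset_set (F ` BD)"
      and "size (num_params m l v \<inter># den_params l) = l 0 - Rk a m c"
      using meq sz cardBD unfolding L_def by simp_all
  next
    assume "boundary_pt a m bi"
    then have "BD' = BD - {bi}" "bi \<in> BD" unfolding BD_def BD'_def using biBk by blast+
    moreover have "finite BD" unfolding BD_def using finBk by simp
    ultimately have "card BD' = card BD - 1" by simp
    then show "num_params m l v \<inter># den_params l = mset_set (F ` BD')"
      and "size (num_params m l v \<inter># den_params l) = l 0 - Rk a m c - 1"
      using meq sz cardBD unfolding L_def by simp_all
  qed
qed

end
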